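(* For every fixed $y\in\mathbb R^{|\mathcal S^{\mathrm h}|\cdot|\Omega|}$ (held constant), the ODE $\frac{dx}{dt}=h(x(t),y)$ on $\mathbb R^{|\mathcal S^{\mathrm l}|\cdot|\mathcal A|}$ has a globally asymptotically stable equilibrium $\lambda(y)$. Moreover, the map $y\mapsto\lambda(y)$ is Lipschitz.
   Context: $\mathcal S,\mathcal A$ are finite sets, $P(s'|s,a)$ a transition kernel on $\mathcal S$, $T\ge1$ an integer, $\Omega=\mathcal S$, $\mathcal S^{\mathrm{de}}=\{0,\dots,T-1\}$ with deterministic kernel $P^{\mathrm{de}}(d'|d)=1$ iff $d'=d+1$ for $d\ne T-1$ and $d'=0$ for $d=T-1$. $\mathcal S^{\mathrm h}=\mathcal S$, $\mathcal S^{\mathrm l}=\mathcal S\times\Omega\times\mathcal S^{\mathrm{de}}$. $r^{\mathrm l}:\mathcal S^{\mathrm l}\times\mathcal A\to\mathbb R$ is bounded, $\gamma^{\mathrm l}\in(0,1)$. Given a high-level policy $\pi^{\mathrm h}(\omega|s)$, the low-level kernel is $P^{\mathrm l}_{\pi^{\mathrm h}}((s',\omega',d')|(s,\omega,d),a)=P^{\mathrm{de}}(d'|d)P(s'|s,a)q$ with $q=0$ if $d\ne T-1,\omega'\ne\omega$; $q=1$ if $d\ne T-1,\omega'=\omega$; $q=\pi^{\mathrm h}(\omega'|s)$ if $d=T-1$. The high-level policy is obtained from a high-level Q-table $Q^{\mathrm h}\in\mathbb R^{|\mathcal S^{\mathrm h}|\times|\Omega|}$ by a policy extraction map $\pi^{\mathrm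 h}=\mathcal F^{\mathrm h}(Q^{\mathrm h})$ that is Lipschitz in the infinity norm. Write $x=\mathrm{vec}(Q^{\mathrm l})$ for $Q^{\mathrm l}\in\mathbb R^{|\mathcal S^{\mathrm l}|\times|\mathcal A|}$ and $y=\mathrm{vec}(Q^{\mathrm h})$. The vector field $h$ has components $h_{s^{\mathrm l},a}(x,y)=r^{\mathrm l}(s^{\mathrm l},a)+\gamma^{\mathrm l}\sum_{s^{\mathrm l,+}}P^{\mathrm l}_{\pi^{\mathrm h}}(s^{\mathrm l,+}|s^{\mathrm l},a)\max_{a^+}Q^{\mathrm l}(s^{\mathrm l,+},a^+)-Q^{\mathrm l}(s^{\mathrm l},a)$, with $\pi^{\mathrm h}=\mathcal F^{\mathrm h}(Q^{\mathrm h})$. *)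

theory Defs
  imports "HOL-Analysis.Analysis"
begin

text \<open>Index conventions.
  's : state set S (also S^h and the option set Omega = S);
  'a : action set A;
  'd : the clock set S^de, identified with {0,...,T-1} via a bijection enc,
       where T = CARD('d) >= 1.
  Low-level state s^l = (s, omega, d) :: 's * 's * 'd.
  x = vec(Q^l) :: real^(('s * 's * 'd) * 'a),  y = vec(Q^h) :: real^('s * 's).\<close>

definition Pde :: "('d \<Rightarrow> nat) \<Rightarrow> 'd \<Rightarrow> 'd \<Rightarrow> real" where
  "Pde enc d d' =
     (if enc d \<noteq> CARD('d) - 1 then (if enc d' = enc d + 1 then 1 else 0)
      else (if enc d' = 0 then 1 else 0))"

text \<open>Low-level transition kernel induced by the high-level policy pih (pih s omega = pi^h(omega|s)).\<close>
definition Pl :: "('d \<Rightarrow> nat) \<Rightarrow> ('s \<Rightarrow> 'a \<Rightarrow> 's \<Rightarrow> real) \<Rightarrow> ('s \<Rightarrow> 's \<Rightarrow> real)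
    \<Rightarrow> ('s \<times> 's \<times> 'd) \<Rightarrow> 'a \<Rightarrow> ('s \<times> 's \<times> 'd) \<Rightarrow> real" where
  "Pl enc P pih sl a sl' =
     (case sl of (s, \<omega>, d) \<Rightarrow> case sl' of (s', \<omega>', d') \<Rightarrow>
        Pde enc d d' * P s a s' *
        (if enc d \<noteq> CARD('d) - 1 then (if \<omega>' = \<omega> then 1 else 0) else pih s \<omega>'))"

definition hfield :: "('d \<Rightarrow> nat) \<Rightarrow> ('s \<Rightarrow> 'a \<Rightarrow> 's \<Rightarrow> real)
    \<Rightarrow> (('s \<times> 's \<times> 'd) \<Rightarrow> 'a \<Rightarrow> real) \<Rightarrow> real
    \<Rightarrow> (real^('s \<times> 's) \<Rightarrow> 's \<Rightarrow> 's \<Rightarrow> real)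
    \<Rightarrow> real^(('s::finite \<times> 's \<times> 'd::finite) \<times> 'a::finite) \<Rightarrow> real^('s \<times> 's)
    \<Rightarrow> real^(('s \<times> 's \<times> 'd) \<times> 'a)" where
  "hfield enc P rl \<gamma> Fh x y = (\<chi> i. case i of (sl, a) \<Rightarrow>
      rl sl a
      + \<gamma> * (\<Sum>sl'\<in>UNIV. Pl enc P (Fh y) sl a sl' * Max (range (\<lambda>a'. x $ (sl', a'))))
      - x $ (sl, a))"

definition ode_solution :: "('v::real_normed_vector \<Rightarrow> 'v) \<Rightarrow> (real \<Rightarrow> 'v) \<Rightarrow> bool" where
  "ode_solution f z \<longleftrightarrow> (\<forall>t\<ge>0. (z has_vector_derivative f (z t)) (at t within {0..}))"

definition glob_asym_stable_eq :: "('v::real_normed_vector \<Rightarrow> 'v) \<Rightarrow> 'v \<Rightarrow> bool" where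
  "glob_asym_stable_eq f e \<longleftrightarrow>
     f e = 0 \<and>
     (\<forall>\<epsilon>>0. \<exists>\<delta>>0. \<forall>z. ode_solution f z \<and> norm (z 0 - e) < \<delta> \<longrightarrow>
                          (\<forall>t\<ge>0. norm (z t - e) < \<epsilon>)) \<and>
     (\<forall>z. ode_solution f z \<longrightarrow> (z \<longlongrightarrow> e) at_top)"

end

theory Submission imports Defs "HOL-Real_Asymp.Real_Asymp"
begin

lemma infnorm_attained: "\<exists>i. infnorm (x::real^'n) = \<bar>x$i\<bar>"
proof -
  have e: "{\<bar>x$i\<bar> |i. i\<in>UNIV} = range (\<lambda>i. \<bar>x$i\<bar>)" by auto
  have "infnorm x = Max (range (\<lambda>i. \<bar>x$i\<bar>))"
    unfolding infnorm_cart e by (rule cSup_eq_Max) auto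
  moreover have "Max (range (\<lambda>i. \<bar>x$i\<bar>)) \<in> range (\<lambda>i. \<bar>x$i\<bar>)"
    by (rule Max_in) auto
  ultimately show ?thesis by (metis (no_types, lifting) imageE)
qed

lemma infnorm_le_cart: "(\<And>i. \<bar>(x::real^'n)$i\<bar> \<le> c) \<Longrightarrow> infnorm x \<le> c"
  using infnorm_attained[of x] by metis

lemma barrier:
  fixes u :: "real \<Rightarrow> real^'n" and g :: "real \<Rightarrow> 'n \<Rightarrow> real"
  assumes cont: "continuous_on {0..} u"
  and der: "\<And>t i. t \<ge> 0 \<Longrightarrow> ((\<lambda>t. u t $ i) has_real_derivative (g t i - u t $ i)) (at t within {0..})"
  and gb: "\<And>t i. t \<ge> 0 \<Longrightarrow> \<bar>g t i\<bar> \<le> \<gamma> * infnorm (u t)"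
  and k: "0 < k" "k < 1 - \<gamma>" and g0: "0 \<le> \<gamma>"
  and c: "infnorm (u 0) < c"
  and t0: "t0 \<ge> 0"
  shows "\<bar>u t0 $ i0\<bar> < c * exp (-k*t0)"
proof (rule ccontr)
  assume neg: "\<not> ?thesis"
  define b where "b t = c * exp (-k*t)" for t
  define f where "f t = infnorm (u t) - b t" for t
  have cpos: "c > 0" using c infnorm_pos_le[of "u 0"] by linarith
  have bpos: "b t > 0" for t using cpos by (simp add: b_def)
  have fc: "continuous_on {0..} f" unfolding f_def b_def
    by (intro continuous_intros cont)
  define S where "S = {0..} \<inter> f -` {0..}"
  have clS: "closed S" unfolding S_def
    by (rule continuous_closed_preimage[OF fc]) auto
  have t0S: "t0 \<in> S" using neg t0 component_le_infnorm_cart[of "u t0" i0]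
    by (auto simp: S_def f_def b_def)
  have bdd: "bdd_below S" unfolding S_def by (rule bdd_belowI[of _ 0]) auto
  define ts where "ts = Inf S"
  have tsS: "ts \<in> S" unfolding ts_def using closed_contains_Inf[OF _ bdd clS] t0S by blast
  have ts0: "ts \<ge> 0" and fts: "f ts \<ge> 0" using tsS by (auto simp: S_def)
  have "f 0 < 0" using c by (simp add: f_def b_def)
  hence tspos: "ts > 0" using ts0 fts by (cases "ts = 0") auto
  have below: "f t < 0" if "0 \<le> t" "t < ts" for t
  proof (rule ccontr)
    assume "\<not> f t < 0"
    hence "t \<in> S" using that by (auto simp: S_def)
    hence "ts \<le> t" unfolding ts_def by (rule cInf_lower[OF _ bdd])
    thus False using that by simp
  qed
  have "f ts \<le> 0"
    apply (rule continuous_le_on_closure[of "{0..<ts}" f ts 0])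
    using tspos fc below by (auto intro: continuous_on_subset less_imp_le)
  hence infeq: "infnorm (u ts) = b ts" using fts by (simp add: f_def)
  obtain i where ii: "infnorm (u ts) = \<bar>u ts $ i\<bar>" using infnorm_attained by blast
  define \<sigma> where "\<sigma> = (if u ts $ i \<ge> 0 then 1 else -1::real)"
  have su: "\<sigma> * u t $ i \<le> \<bar>u t $ i\<bar>" for t unfolding \<sigma>_def by auto
  have suts: "\<sigma> * u ts $ i = b ts" using ii infeq unfolding \<sigma>_def by auto
  have sg: "\<sigma> * g ts i \<le> \<bar>g ts i\<bar>" unfolding \<sigma>_def by auto
  define \<phi> where "\<phi> t = \<sigma> * u t $ i - b t" for t
  have d1: "((\<lambda>t. u t $ i) has_real_derivative (g ts i - u ts $ i)) (at ts)"
  proof -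
    have "ts \<in> interior {0::real..}" using tspos by simp
    hence "at ts within {0..} = at ts" by (rule at_within_interior)
    moreover have "((\<lambda>t. u t $ i) has_real_derivative (g ts i - u ts $ i)) (at ts within {0..})"
      by (rule der[OF ts0])
    ultimately show ?thesis by metis
  qed
  have dphi: "(\<phi> has_real_derivative (\<sigma> * (g ts i - u ts $ i) - c * (exp (-k*ts) * (-k)))) (at ts)"
  proof -
    have e: "((\<lambda>t. c*exp(-k*t)) has_real_derivative c*(exp(-k*ts)*(-k))) (at ts)"
      by (auto intro!: derivative_eq_intros)
    show ?thesis unfolding \<phi>_def b_def using DERIV_diff[OF DERIV_cmult[OF d1, of \<sigma>] e] by simp
  qed
  have "\<sigma> * (g ts i - u ts $ i) - c * (exp (-k*ts) * (-k)) = \<sigma> * g ts i - b ts + k * b ts"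
    using suts by (simp add: b_def algebra_simps)
  also have "\<dots> \<le> \<gamma> * b ts - b ts + k * b ts"
    using sg gb[OF ts0, of i] infeq by simp
  also have "\<dots> < 0"
  proof -
    have "(\<gamma> - 1 + k) * b ts < 0" using k bpos[of ts] by (intro mult_neg_pos) auto
    thus ?thesis by (simp add: algebra_simps)
  qed
  finally obtain d where d: "d > 0" "\<And>h. h > 0 \<Longrightarrow> h < d \<Longrightarrow> \<phi> ts < \<phi> (ts - h)"
    using DERIV_neg_dec_left[OF dphi] by blast
  define h where "h = min d ts / 2"
  have h: "h > 0" "h < d" "h \<le> ts" using d tspos by (auto simp: h_def)
  have "\<phi> ts = 0" using suts by (simp add: \<phi>_def)
  hence "0 < \<phi> (ts - h)" using d h by metis
  hence "b (ts - h) < \<bar>u (ts - h) $ i\<bar>" using su[of "ts - h"] by (simp add: \<phi>_def)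
  hence "f (ts - h) > 0" using component_le_infnorm_cart[of "u (ts-h)" i] by (simp add: f_def)
  moreover have "f (ts - h) < 0" using below h by auto
  ultimately show False by simp
qed

lemma contraction_fix:
  fixes T :: "real^'n \<Rightarrow> real^'n"
  assumes g: "0 \<le> \<gamma>" "\<gamma> < 1"
  and contr: "\<And>x y. infnorm (T x - T y) \<le> \<gamma> * infnorm (x - y)"
  shows "\<exists>p. T p = p"
proof -
  define N where "N = sqrt (real DIM(real^'n))"
  have N1: "N \<ge> 1" unfolding N_def using DIM_positive[where 'a="real^'n"] by simp
  obtain m where m: "\<gamma>^m < 1 / (2*N)" using real_arch_pow_inv[of "1/(2*N)" \<gamma>] N1 g by auto
  have it: "infnorm ((T^^n) x - (T^^n) y) \<le> \<gamma>^n * infnorm (x - y)" for n x y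
  proof (induction n)
    case 0 then show ?case by simp
  next
    case (Suc n)
    have "infnorm ((T^^Suc n) x - (T^^Suc n) y) \<le> \<gamma> * infnorm ((T^^n) x - (T^^n) y)"
      using contr by simp
    also have "\<dots> \<le> \<gamma> * (\<gamma>^n * infnorm (x - y))" using Suc g by (intro mult_left_mono) auto
    finally show ?case by simp
  qed
  have "\<forall>x y. dist ((T^^m) x) ((T^^m) y) \<le> (N * \<gamma>^m) * dist x y"
  proof (intro allI)
    fix x y
    have "dist ((T^^m) x) ((T^^m) y) \<le> N * infnorm ((T^^m) x - (T^^m) y)"
      unfolding dist_norm N_def by (rule norm_le_infnorm)
    also have "\<dots> \<le> N * (\<gamma>^m * infnorm (x - y))" using it N1 by (intro mult_left_mono) auto
    also have "\<dots> \<le> N * (\<gamma>^m * dist x y)" using N1 g infnorm_le_norm[of "x-y"]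
      by (intro mult_left_mono) (auto simp: dist_norm)
    finally show "dist ((T^^m) x) ((T^^m) y) \<le> (N * \<gamma>^m) * dist x y" by simp
  qed
  moreover have "0 \<le> N * \<gamma>^m" using N1 g by simp
  moreover have "N * \<gamma>^m < 1" using m N1 by (simp add: field_simps)
  ultimately obtain p where p: "(T^^m) p = p" and uq: "\<And>q. (T^^m) q = q \<Longrightarrow> q = p"
    using banach_fix_type[of "N * \<gamma>^m" "T^^m"] by metis
  have "(T^^m) (T p) = T p" by (metis funpow_swap1 p)
  hence "T p = p" by (rule uq)
  thus ?thesis by blast
qed

lemma ode_bound:
  fixes T :: "real^'n \<Rightarrow> real^'n"
  assumes g: "0 < \<gamma>" "\<gamma> < 1"
  and contr: "\<And>x y. infnorm (T x - T y) \<le> \<gamma> * infnorm (x - y)"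
  and fp: "T e = e"
  and sol: "ode_solution (\<lambda>x. T x - x) z"
  and c: "infnorm (z 0 - e) < c"
  and t: "t \<ge> 0"
  shows "infnorm (z t - e) \<le> c * exp (- ((1 - \<gamma>)/2) * t)"
proof -
  define u where "u t = z t - e" for t
  have zd: "\<And>t. t \<ge> 0 \<Longrightarrow> (z has_vector_derivative (T (z t) - z t)) (at t within {0..})"
    using sol unfolding ode_solution_def by auto
  have ud: "(u has_vector_derivative (T (z t) - z t)) (at t within {0..})" if "t \<ge> 0" for t
    unfolding u_def using has_vector_derivative_diff[OF zd[OF that] has_vector_derivative_const[of e]]
    by simp
  have cont: "continuous_on {0..} u"
    unfolding continuous_on_eq_continuous_within
  proof
    fix t :: real assume "t \<in> {0..}"
    hence "t \<ge> 0" by simp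
    thus "continuous (at t within {0..}) u" by (rule has_vector_derivative_continuous[OF ud])
  qed
  define gg where "gg t i = (T (z t) - T e) $ i" for t i
  have der: "((\<lambda>t. u t $ i) has_real_derivative (gg t i - u t $ i)) (at t within {0..})"
    if "t \<ge> 0" for t i
  proof -
    have "((\<lambda>t. u t $ i) has_vector_derivative (T (z t) - z t) $ i) (at t within {0..})"
      by (rule bounded_linear.has_vector_derivative[OF bounded_linear_vec_nth ud[OF that]])
    moreover have "(T (z t) - z t) $ i = gg t i - u t $ i" unfolding gg_def u_def using fp by simp
    ultimately show ?thesis by (simp add: has_real_derivative_iff_has_vector_derivative)
  qed
  have gb: "\<bar>gg t i\<bar> \<le> \<gamma> * infnorm (u t)" if "t \<ge> 0" for t i
    unfolding gg_def u_def using component_le_infnorm_cart[of "T (z t) - T e" i] contr[of "z t" e]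
    by linarith
  have "\<bar>u t $ i\<bar> < c * exp (- ((1 - \<gamma>)/2) * t)" for i
    by (rule barrier[OF cont der gb _ _ _ _ t]) (use g c u_def in auto)
  thus ?thesis unfolding u_def by (intro infnorm_le_cart less_imp_le)
qed

lemma gas_contraction:
  fixes T :: "real^'n \<Rightarrow> real^'n"
  assumes g: "0 < \<gamma>" "\<gamma> < 1"
  and contr: "\<And>x y. infnorm (T x - T y) \<le> \<gamma> * infnorm (x - y)"
  and fp: "T e = e"
  shows "glob_asym_stable_eq (\<lambda>x. T x - x) e"
proof -
  define N where "N = sqrt (real DIM(real^'n))"
  have N1: "N \<ge> 1" unfolding N_def using DIM_positive[where 'a="real^'n"] by simp
  have nl: "norm v \<le> N * infnorm v" for v :: "real^'n" unfolding N_def by (rule norm_le_infnorm)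
  define k where "k = (1 - \<gamma>)/2"
  have k: "k > 0" using g by (simp add: k_def)
  have stab: "\<forall>\<epsilon>>0. \<exists>\<delta>>0. \<forall>z. ode_solution (\<lambda>x. T x - x) z \<and> norm (z 0 - e) < \<delta> \<longrightarrow>
                          (\<forall>t\<ge>0. norm (z t - e) < \<epsilon>)"
  proof (intro allI impI)
    fix \<epsilon> :: real assume ep: "\<epsilon> > 0"
    define \<delta> where "\<delta> = \<epsilon> / (N + 1)"
    have dpos: "\<delta> > 0" using ep N1 by (simp add: \<delta>_def)
    have "N * \<delta> < \<epsilon>" using ep N1 by (simp add: \<delta>_def field_simps)
    show "\<exists>\<delta>>0. \<forall>z. ode_solution (\<lambda>x. T x - x) z \<and> norm (z 0 - e) < \<delta> \<longrightarrow>
                          (\<forall>t\<ge>0. norm (z t - e) < \<epsilon>)"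
    proof (intro exI[of _ \<delta>] conjI allI impI dpos)
      fix z t assume zz: "ode_solution (\<lambda>x. T x - x) z \<and> norm (z 0 - e) < \<delta>" and t: "(t::real) \<ge> 0"
      have "infnorm (z 0 - e) < \<delta>" using zz infnorm_le_norm[of "z 0 - e"] by linarith
      hence "infnorm (z t - e) \<le> \<delta> * exp (- ((1 - \<gamma>)/2) * t)"
        using ode_bound[OF g contr fp _ _ t] zz by blast
      also have "\<dots> \<le> \<delta>" using dpos k t by (simp add: k_def[symmetric] mult_le_cancel_left1)
      finally have "norm (z t - e) \<le> N * \<delta>" using nl[of "z t - e"] N1
        by (meson le_trans mult_left_mono order_trans zero_le_one)
      thus "norm (z t - e) < \<epsilon>" using \<open>N * \<delta> < \<epsilon>\<close> by linarith
    qed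
  qed
  have conv: "(z \<longlongrightarrow> e) at_top" if zs: "ode_solution (\<lambda>x. T x - x) z" for z
  proof -
    define c where "c = infnorm (z 0 - e) + 1"
    have b: "norm (z t - e) \<le> N * c * exp (- k * t)" if "t \<ge> 0" for t
    proof -
      have "infnorm (z t - e) \<le> c * exp (- k * t)"
        using ode_bound[OF g contr fp zs _ that, of c] by (simp add: c_def k_def)
      thus ?thesis using nl[of "z t - e"] N1
        by (smt (verit, best) mult.assoc mult_left_mono)
    qed
    have lim: "((\<lambda>t. N * c * exp (- k * t)) \<longlongrightarrow> 0) at_top" using k
      by real_asymp
    have "((\<lambda>t. z t - e) \<longlongrightarrow> 0) at_top"
      apply (rule Lim_null_comparison[OF _ lim])
      using b by (intro eventually_mono[OF eventually_ge_at_top[of "0::real"]]) auto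
    thus ?thesis by (simp add: LIM_zero_iff)
  qed
  show ?thesis unfolding glob_asym_stable_eq_def using fp stab conv by auto
qed


lemma le1_mult: "a \<le> 1 \<Longrightarrow> 0 \<le> c \<Longrightarrow> a*c \<le> (c::real)"
  using mult_right_mono[of a 1 c] by simp

lemma Max_range_diff:
  fixes f g :: "'a::finite \<Rightarrow> real"
  assumes "\<And>a. \<bar>f a - g a\<bar> \<le> c"
  shows "\<bar>Max (range f) - Max (range g)\<bar> \<le> c"
proof -
  have "Max (range f) \<in> range f" by (rule Max_in) auto
  then obtain a where a: "Max (range f) = f a" by blast
  have "Max (range g) \<in> range g" by (rule Max_in) auto
  then obtain b where b: "Max (range g) = g b" by blast
  have "f b \<le> f a" using a Max_ge[of "range f" "f b"] by auto
  moreover have "g a \<le> g b" using b Max_ge[of "range g" "g a"] by auto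
  ultimately show ?thesis using a b assms[of a] assms[of b] by linarith
qed

lemma Max_range_abs:
  fixes x :: "real^('l::finite \<times> 'a::finite)"
  shows "\<bar>Max (range (\<lambda>a'. x $ (l, a')))\<bar> \<le> infnorm x"
proof -
  have "\<bar>Max (range (\<lambda>a'. x $ (l, a'))) - Max (range (\<lambda>a'::'a. 0::real))\<bar> \<le> infnorm x"
    by (rule Max_range_diff) (simp add: component_le_infnorm_cart)
  thus ?thesis by simp
qed

lemma Max_range_lip:
  fixes x y :: "real^('l::finite \<times> 'a::finite)"
  shows "\<bar>Max (range (\<lambda>a'. x $ (l, a'))) - Max (range (\<lambda>a'. y $ (l, a')))\<bar> \<le> infnorm (x - y)"
  by (rule Max_range_diff) (metis component_le_infnorm_cart vector_minus_component)

lemma sum_UNIV_triple: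
  "(\<Sum>x\<in>(UNIV::('a::finite\<times>'b::finite\<times>'c::finite) set). f x) = (\<Sum>a\<in>UNIV. \<Sum>b\<in>UNIV. \<Sum>c\<in>UNIV. f (a,b,c))"
  by (simp add: sum.cartesian_product UNIV_Times_UNIV[symmetric] del: UNIV_Times_UNIV)

lemma Pde_nonneg: "Pde enc d d' \<ge> 0" by (simp add: Pde_def)
lemma Pde_le1: "Pde enc d d' \<le> 1" by (simp add: Pde_def)

lemma Pde_sum:
  fixes enc :: "'d::finite \<Rightarrow> nat"
  assumes "inj enc"
  shows "(\<Sum>d'\<in>UNIV. Pde enc d d') \<le> 1"
proof -
  define v where "v = (if enc d \<noteq> CARD('d) - 1 then enc d + 1 else 0)"
  have e: "Pde enc d d' = (if enc d' = v then 1 else 0)" for d' unfolding Pde_def v_def by auto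
  show ?thesis
  proof (cases "\<exists>d0. enc d0 = v")
    case True
    then obtain d0 where d0: "enc d0 = v" by blast
    have "\<And>d'. (enc d' = v) = (d' = d0)" using d0 assms by (auto dest: injD)
    hence "(\<Sum>d'\<in>UNIV. Pde enc d d') = (\<Sum>d'\<in>UNIV. if d' = d0 then 1 else 0)" unfolding e by simp
    also have "\<dots> = 1" using sum.delta[of UNIV d0 "\<lambda>_. 1::real"] by simp
    finally show ?thesis by simp
  next
    case False
    thus ?thesis unfolding e by auto
  qed
qed

definition Tb :: "('d \<Rightarrow> nat) \<Rightarrow> ('s \<Rightarrow> 'a \<Rightarrow> 's \<Rightarrow> real)
    \<Rightarrow> (('s \<times> 's \<times> 'd) \<Rightarrow> 'a \<Rightarrow> real) \<Rightarrow> real \<Rightarrow> ('s \<Rightarrow> 's \<Rightarrow> real)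
    \<Rightarrow> real^(('s::finite \<times> 's \<times> 'd::finite) \<times> 'a::finite) \<Rightarrow> real^(('s \<times> 's \<times> 'd) \<times> 'a)" where
  "Tb enc P rl \<gamma> pih x = (\<chi> i. case i of (sl, a) \<Rightarrow>
      rl sl a + \<gamma> * (\<Sum>sl'\<in>UNIV. Pl enc P pih sl a sl' * Max (range (\<lambda>a'. x $ (sl', a')))))"

lemma hfield_Tb: "hfield enc P rl \<gamma> Fh x y = Tb enc P rl \<gamma> (Fh y) x - x"
  by (simp add: hfield_def Tb_def vec_eq_iff case_prod_unfold)

locale mdp =
  fixes enc :: "'d::finite \<Rightarrow> nat" and P :: "'s::finite \<Rightarrow> 'a::finite \<Rightarrow> 's \<Rightarrow> real"
  assumes P_nonneg: "\<And>s a s'. P s a s' \<ge> 0"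
    and P_sum: "\<And>s a. (\<Sum>s'\<in>UNIV. P s a s') = 1"
    and enc_inj: "inj enc"
begin

lemma P_le1: "P s a s' \<le> 1"
  using member_le_sum[of s' UNIV "P s a"] P_nonneg P_sum by auto

lemma Pl_nonneg:
  assumes "\<And>s \<omega>. pih s \<omega> \<ge> 0"
  shows "Pl enc P pih sl a sl' \<ge> 0"
  using assms P_nonneg Pde_nonneg
  by (auto simp: Pl_def split: prod.splits intro!: mult_nonneg_nonneg)

lemma Pl_sum:
  assumes "\<And>s \<omega>. pih s \<omega> \<ge> 0" "\<And>s. (\<Sum>\<omega>\<in>UNIV. pih s \<omega>) = 1"
  shows "(\<Sum>sl'\<in>UNIV. Pl enc P pih sl a sl') \<le> 1"
proof -
  obtain s \<omega> d where sl: "sl = (s, \<omega>, d)" by (cases sl) auto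
  define q where "q \<omega>' = (if enc d \<noteq> CARD('d) - 1 then (if \<omega>' = \<omega> then 1 else 0) else pih s \<omega>')" for \<omega>'
  have q1: "(\<Sum>\<omega>'\<in>UNIV. q \<omega>') = 1"
  proof (cases "enc d \<noteq> CARD('d) - 1")
    case True thus ?thesis by (simp add: q_def sum.delta)
  next
    case False thus ?thesis using assms(2) by (simp add: q_def)
  qed
  have "(\<Sum>sl'\<in>UNIV. Pl enc P pih sl a sl') =
        (\<Sum>s'\<in>UNIV. \<Sum>\<omega>'\<in>UNIV. \<Sum>d'\<in>UNIV. Pde enc d d' * (P s a s' * q \<omega>'))"
    unfolding sum_UNIV_triple by (simp add: Pl_def sl q_def mult.assoc)
  also have "\<dots> = (\<Sum>s'\<in>UNIV. \<Sum>\<omega>'\<in>UNIV. (\<Sum>d'\<in>UNIV. Pde enc d d') * (P s a s' * q \<omega>'))"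
    by (simp add: sum_distrib_right)
  also have "\<dots> \<le> (\<Sum>s'\<in>UNIV. \<Sum>\<omega>'\<in>UNIV. 1 * (P s a s' * q \<omega>'))"
    using Pde_sum[OF enc_inj, of d] P_nonneg assms(1)
    by (intro sum_mono mult_right_mono) (auto simp: q_def)
  also have "\<dots> = 1" using q1 P_sum by (simp add: sum_distrib_left[symmetric])
  finally show ?thesis .
qed

lemma Pl_diff:
  assumes "\<And>s \<omega>. \<bar>pih1 s \<omega> - pih2 s \<omega>\<bar> \<le> K"
  shows "\<bar>Pl enc P pih1 sl a sl' - Pl enc P pih2 sl a sl'\<bar> \<le> K"
proof -
  obtain s \<omega> d where sl: "sl = (s, \<omega>, d)" by (cases sl) auto
  obtain s' \<omega>' d' where sl': "sl' = (s', \<omega>', d')" by (cases sl') auto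
  have K0: "K \<ge> 0" using assms[of s \<omega>] by linarith
  show ?thesis
  proof (cases "enc d \<noteq> CARD('d) - 1")
    case True thus ?thesis using K0 by (simp add: Pl_def sl sl')
  next
    case False
    hence "\<bar>Pl enc P pih1 sl a sl' - Pl enc P pih2 sl a sl'\<bar>
        = (Pde enc d d' * P s a s') * \<bar>pih1 s \<omega>' - pih2 s \<omega>'\<bar>"
      using Pde_nonneg[of enc d d'] P_nonneg[of s a s']
      by (simp add: Pl_def sl sl' right_diff_distrib[symmetric] abs_mult)
    also have "\<dots> \<le> 1 * K" using Pde_nonneg[of enc d d'] P_nonneg[of s a s'] assms
        mult_le_one[OF Pde_le1 P_nonneg P_le1]
      by (intro mult_mono) auto
    finally show ?thesis by simp
  qed
qed

end


context mdp
begin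

lemma Tb_contr:
  assumes pn: "\<And>s \<omega>. pih s \<omega> \<ge> 0" and ps: "\<And>s. (\<Sum>\<omega>\<in>UNIV. pih s \<omega>) = 1"
  and g: "0 \<le> \<gamma>"
  shows "infnorm (Tb enc P rl \<gamma> pih x - Tb enc P rl \<gamma> pih x') \<le> \<gamma> * infnorm (x - x')"
proof (rule infnorm_le_cart)
  fix i :: "('s \<times> 's \<times> 'd) \<times> 'a"
  obtain sl a where i: "i = (sl, a)" by (cases i) auto
  define M where "M x sl' = Max (range (\<lambda>a'. x $ (sl', a')))" for x :: "real^(('s \<times> 's \<times> 'd) \<times> 'a)" and sl'
  have "(Tb enc P rl \<gamma> pih x - Tb enc P rl \<gamma> pih x') $ i
      = \<gamma> * (\<Sum>sl'\<in>UNIV. Pl enc P pih sl a sl' * (M x sl' - M x' sl'))"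
    by (simp add: Tb_def i M_def sum_subtractf right_diff_distrib)
  also have "\<bar>\<dots>\<bar> = \<gamma> * \<bar>\<Sum>sl'\<in>UNIV. Pl enc P pih sl a sl' * (M x sl' - M x' sl')\<bar>"
    using g by (simp add: abs_mult)
  also have "\<dots> \<le> \<gamma> * (\<Sum>sl'\<in>UNIV. Pl enc P pih sl a sl' * infnorm (x - x'))"
  proof (intro mult_left_mono g order.trans[OF sum_abs] sum_mono)
    fix sl' :: "'s \<times> 's \<times> 'd"
    show "\<bar>Pl enc P pih sl a sl' * (M x sl' - M x' sl')\<bar> \<le> Pl enc P pih sl a sl' * infnorm (x - x')"
      using Pl_nonneg[OF pn] Max_range_lip[of x sl' x'] unfolding M_def
      by (simp add: abs_mult mult_left_mono)
  qed
  also have "\<dots> \<le> \<gamma> * infnorm (x - x')"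
    using Pl_sum[of pih sl a, OF pn ps] infnorm_pos_le[of "x - x'"] g
    by (simp add: sum_distrib_right[symmetric] le1_mult mult_left_mono)
  finally show "\<bar>(Tb enc P rl \<gamma> pih x - Tb enc P rl \<gamma> pih x') $ i\<bar> \<le> \<gamma> * infnorm (x - x')" .
qed

lemma Tb_bound:
  assumes pn: "\<And>s \<omega>. pih s \<omega> \<ge> 0" and ps: "\<And>s. (\<Sum>\<omega>\<in>UNIV. pih s \<omega>) = 1"
  and g: "0 \<le> \<gamma>" and R: "\<And>sl a. \<bar>rl sl a\<bar> \<le> R"
  shows "infnorm (Tb enc P rl \<gamma> pih x) \<le> R + \<gamma> * infnorm x"
proof (rule infnorm_le_cart)
  fix i :: "('s \<times> 's \<times> 'd) \<times> 'a"
  obtain sl a where i: "i = (sl, a)" by (cases i) auto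
  have "\<bar>(\<Sum>sl'\<in>UNIV. Pl enc P pih sl a sl' * Max (range (\<lambda>a'. x $ (sl', a'))))\<bar>
        \<le> (\<Sum>sl'\<in>UNIV. Pl enc P pih sl a sl' * infnorm x)"
  proof (intro order.trans[OF sum_abs] sum_mono)
    fix sl' :: "'s \<times> 's \<times> 'd"
    show "\<bar>Pl enc P pih sl a sl' * Max (range (\<lambda>a'. x $ (sl', a')))\<bar> \<le> Pl enc P pih sl a sl' * infnorm x"
      using Pl_nonneg[OF pn] Max_range_abs[of x sl']
      by (simp add: abs_mult mult_left_mono)
  qed
  also have "\<dots> \<le> infnorm x"
    using Pl_sum[of pih sl a, OF pn ps] infnorm_pos_le[of x]
    by (simp add: sum_distrib_right[symmetric] le1_mult)
  finally have "\<gamma> * \<bar>(\<Sum>sl'\<in>UNIV. Pl enc P pih sl a sl' * Max (range (\<lambda>a'. x $ (sl', a'))))\<bar> \<le> \<gamma> * infnorm x"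
    by (rule mult_left_mono[OF _ g])
  thus "\<bar>Tb enc P rl \<gamma> pih x $ i\<bar> \<le> R + \<gamma> * infnorm x"
  proof -
    have "Tb enc P rl \<gamma> pih x $ i = rl sl a + \<gamma> * (\<Sum>sl'\<in>UNIV. Pl enc P pih sl a sl' * Max (range (\<lambda>a'. x $ (sl', a'))))"
      by (simp add: Tb_def i)
    also have "\<bar>\<dots>\<bar> \<le> \<bar>rl sl a\<bar> + \<gamma> * \<bar>(\<Sum>sl'\<in>UNIV. Pl enc P pih sl a sl' * Max (range (\<lambda>a'. x $ (sl', a'))))\<bar>"
      using abs_triangle_ineq[of "rl sl a" "\<gamma> * (\<Sum>sl'\<in>UNIV. Pl enc P pih sl a sl' * Max (range (\<lambda>a'. x $ (sl', a'))))"] g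
      by (simp add: abs_mult)
    finally show ?thesis using R[of sl a] \<open>\<gamma> * _ \<le> _\<close> by linarith
  qed
qed

lemma Tb_pol:
  assumes K: "\<And>s \<omega>. \<bar>pih1 s \<omega> - pih2 s \<omega>\<bar> \<le> K"
  and g: "0 \<le> \<gamma>"
  shows "infnorm (Tb enc P rl \<gamma> pih1 x - Tb enc P rl \<gamma> pih2 x)
     \<le> \<gamma> * (real CARD('s \<times> 's \<times> 'd) * K * infnorm x)"
proof (rule infnorm_le_cart)
  fix i :: "('s \<times> 's \<times> 'd) \<times> 'a"
  obtain sl a where i: "i = (sl, a)" by (cases i) auto
  define M where "M sl' = Max (range (\<lambda>a'. x $ (sl', a')))" for sl'
  have "(Tb enc P rl \<gamma> pih1 x - Tb enc P rl \<gamma> pih2 x) $ i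
      = \<gamma> * (\<Sum>sl'\<in>UNIV. (Pl enc P pih1 sl a sl' - Pl enc P pih2 sl a sl') * M sl')"
    by (simp add: Tb_def i M_def sum_subtractf right_diff_distrib left_diff_distrib)
  also have "\<bar>\<dots>\<bar> = \<gamma> * \<bar>\<Sum>sl'\<in>UNIV. (Pl enc P pih1 sl a sl' - Pl enc P pih2 sl a sl') * M sl'\<bar>"
    using g by (simp add: abs_mult)
  also have "\<dots> \<le> \<gamma> * (\<Sum>sl'\<in>(UNIV::('s \<times> 's \<times> 'd) set). K * infnorm x)"
  proof (intro mult_left_mono g order.trans[OF sum_abs] sum_mono)
    fix sl' :: "'s \<times> 's \<times> 'd"
    show "\<bar>(Pl enc P pih1 sl a sl' - Pl enc P pih2 sl a sl') * M sl'\<bar> \<le> K * infnorm x"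
      unfolding abs_mult M_def
      using Pl_diff[of pih1 pih2 K sl a sl', OF K] Max_range_abs[of x sl']
      by (intro mult_mono) auto
  qed
  also have "\<dots> = \<gamma> * (real CARD('s \<times> 's \<times> 'd) * K * infnorm x)" by simp
  finally show "\<bar>(Tb enc P rl \<gamma> pih1 x - Tb enc P rl \<gamma> pih2 x) $ i\<bar> \<le> \<gamma> * (real CARD('s \<times> 's \<times> 'd) * K * infnorm x)" .
qed

end


theorem lemma1:
  fixes P :: "'s::finite \<Rightarrow> 'a::finite \<Rightarrow> 's \<Rightarrow> real"
    and enc :: "'d::finite \<Rightarrow> nat"
    and rl :: "('s \<times> 's \<times> 'd) \<Rightarrow> 'a \<Rightarrow> real"
    and \<gamma> :: real
    and Fh :: "real^('s \<times> 's) \<Rightarrow> 's \<Rightarrow> 's \<Rightarrow> real"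
  assumes P_nonneg: "\<And>s a s'. P s a s' \<ge> 0"
    and P_sum: "\<And>s a. (\<Sum>s'\<in>UNIV. P s a s') = 1"
    and enc_bij: "bij_betw enc UNIV {..<CARD('d)}"
    and gamma: "0 < \<gamma>" "\<gamma> < 1"
    and Fh_policy_nonneg: "\<And>y s \<omega>. Fh y s \<omega> \<ge> 0"
    and Fh_policy_sum: "\<And>y s. (\<Sum>\<omega>\<in>UNIV. Fh y s \<omega>) = 1"
    and Fh_lipschitz: "\<exists>L. \<forall>y1 y2 s \<omega>. \<bar>Fh y1 s \<omega> - Fh y2 s \<omega>\<bar> \<le> L * infnorm (y1 - y2)"
  shows "\<exists>lam :: real^('s \<times> 's) \<Rightarrow> real^(('s \<times> 's \<times> 'd) \<times> 'a).
           (\<forall>y. glob_asym_stable_eq (\<lambda>x. hfield enc P rl \<gamma> Fh x y) (lam y)) \<and>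
           (\<exists>L. L-lipschitz_on UNIV lam)"
proof -
  interpret mdp enc P
    using P_nonneg P_sum enc_bij by unfold_locales (auto simp: bij_betw_def)
  obtain L0 where L0: "\<And>y1 y2 s \<omega>. \<bar>Fh y1 s \<omega> - Fh y2 s \<omega>\<bar> \<le> L0 * infnorm (y1 - y2)"
    using Fh_lipschitz by blast
  have L: "\<bar>Fh y1 s \<omega> - Fh y2 s \<omega>\<bar> \<le> \<bar>L0\<bar> * infnorm (y1 - y2)" for y1 y2 s \<omega>
    by (rule order_trans[OF L0 mult_right_mono]) (auto simp: infnorm_pos_le)
  have g0: "0 \<le> \<gamma>" using gamma by simp
  define T where "T y = Tb enc P rl \<gamma> (Fh y)" for y
  have contr: "infnorm (T y x - T y x') \<le> \<gamma> * infnorm (x - x')" for y x x'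
    unfolding T_def by (rule Tb_contr[OF Fh_policy_nonneg Fh_policy_sum g0])
  define lam where "lam y = (SOME p. T y p = p)" for y
  have fp: "T y (lam y) = lam y" for y
    unfolding lam_def using contraction_fix[OF g0 gamma(2) contr, of y] by (rule someI_ex)
  define R where "R = (\<Sum>i\<in>(UNIV::(('s \<times> 's \<times> 'd) \<times> 'a) set). \<bar>rl (fst i) (snd i)\<bar>)"
  have R: "\<bar>rl sl a\<bar> \<le> R" for sl a
    unfolding R_def using member_le_sum[of "(sl, a)" UNIV "\<lambda>i. \<bar>rl (fst i) (snd i)\<bar>"] by simp
  have R0: "R \<ge> 0" unfolding R_def by (simp add: sum_nonneg)
  define B where "B = R / (1 - \<gamma>)"
  have B0: "B \<ge> 0" using R0 gamma by (simp add: B_def)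
  have bnd: "infnorm (lam y) \<le> B" for y
  proof -
    have "infnorm (lam y) \<le> R + \<gamma> * infnorm (lam y)"
      using Tb_bound[where pih="Fh y" and x="lam y" and rl=rl and R=R, OF Fh_policy_nonneg Fh_policy_sum g0 R] fp[of y]
      unfolding T_def by simp
    hence "(1 - \<gamma>) * infnorm (lam y) \<le> R" by (simp add: algebra_simps)
    thus ?thesis using gamma by (simp add: B_def field_simps)
  qed
  have part1: "glob_asym_stable_eq (\<lambda>x. hfield enc P rl \<gamma> Fh x y) (lam y)" for y
  proof -
    have "(\<lambda>x. hfield enc P rl \<gamma> Fh x y) = (\<lambda>x. T y x - x)"
      by (simp add: hfield_Tb T_def)
    thus ?thesis using gas_contraction[OF gamma contr fp, of y] by simp
  qed
  define D where "D = \<gamma> * real CARD('s \<times> 's \<times> 'd) * \<bar>L0\<bar> * B / (1 - \<gamma>)"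
  have D0: "D \<ge> 0" using gamma B0 by (simp add: D_def)
  have lipinf: "infnorm (lam y1 - lam y2) \<le> D * infnorm (y1 - y2)" for y1 y2
  proof -
    have e: "lam y1 - lam y2 = (T y1 (lam y1) - T y1 (lam y2)) + (T y1 (lam y2) - T y2 (lam y2))"
      using fp[of y1] fp[of y2] by simp
    have a1: "infnorm (lam y1 - lam y2) \<le> infnorm (T y1 (lam y1) - T y1 (lam y2)) + infnorm (T y1 (lam y2) - T y2 (lam y2))"
      unfolding e by (rule infnorm_triangle)
    have a2: "infnorm (T y1 (lam y1) - T y1 (lam y2)) \<le> \<gamma> * infnorm (lam y1 - lam y2)"
      by (rule contr)
    have a3: "infnorm (T y1 (lam y2) - T y2 (lam y2)) \<le> \<gamma> * (real CARD('s \<times> 's \<times> 'd) * (\<bar>L0\<bar> * infnorm (y1 - y2)) * infnorm (lam y2))"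
      unfolding T_def by (rule Tb_pol[OF L g0])
    have a4: "\<gamma> * (real CARD('s \<times> 's \<times> 'd) * (\<bar>L0\<bar> * infnorm (y1 - y2)) * infnorm (lam y2))
        \<le> \<gamma> * (real CARD('s \<times> 's \<times> 'd) * (\<bar>L0\<bar> * infnorm (y1 - y2)) * B)"
      using bnd[of y2] g0 infnorm_pos_le[of "y1 - y2"]
      by (intro mult_left_mono) auto
    have "(1 - \<gamma>) * infnorm (lam y1 - lam y2) \<le> \<gamma> * real CARD('s \<times> 's \<times> 'd) * \<bar>L0\<bar> * B * infnorm (y1 - y2)"
      using a1 a2 a3 a4 by (simp add: algebra_simps)
    thus ?thesis using gamma by (simp add: D_def field_simps)
  qed
  define N where "N = sqrt (real DIM(real^(('s \<times> 's \<times> 'd) \<times> 'a)))"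
  have N0: "N \<ge> 0" by (simp add: N_def)
  have "(N * D)-lipschitz_on UNIV lam"
  proof (rule lipschitz_onI)
    fix y1 y2 :: "real^('s \<times> 's)"
    have "dist (lam y1) (lam y2) \<le> N * infnorm (lam y1 - lam y2)"
      unfolding dist_norm N_def by (rule norm_le_infnorm)
    also have "\<dots> \<le> N * (D * infnorm (y1 - y2))" using lipinf N0 by (intro mult_left_mono) auto
    also have "\<dots> \<le> N * (D * dist y1 y2)" using N0 D0 infnorm_le_norm[of "y1 - y2"]
      by (intro mult_left_mono) (auto simp: dist_norm)
    finally show "dist (lam y1) (lam y2) \<le> N * D * dist y1 y2" by simp
  next
    show "0 \<le> N * D" using N0 D0 by simp
  qed
  thus ?thesis using part1 by blast
qed

end
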